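(* For all nonnegative integers $n$ and $k$, $$W_{m,r}[n,k]_q=\frac{1}{[k]_{q^m}!\,[m]_q^{k}}\sum_{j=0}^{k}(-1)^{k-j}\,q^{m\binom{k-j}{2}}\begin{bmatrix}k\\ j\end{bmatrix}_{q^m}[jm+r]_q^{\,n}.$$
   Context: Fix a real number $q>0$ with $q\neq 1$, a positive integer $m$ and a complex number $r$. For complex $x$ put $q^x=e^{x\ln q}$ and $[x]_q=\frac{1-q^x}{1-q}$. For $p>0$, $p\ne 1$ and integers $0\le j\le k$: $[i]_p=\frac{1-p^i}{1-p}$, $[k]_p!=\prod_{i=1}^{k}[i]_p$ (with $[0]_p!=1$), and $\begin{bmatrix}k\\ j\end{bmatrix}_p=\frac{[k]_p!}{[j]_p!\,[k-j]_p!}$. The numbers $W_{m,r}[n,k]_q$ (a $q$-analogue of the $r$-Whitney numbers of the second kind), for integers $n,k$, are defined by $W_{m,r}[0,0]_q=1$, $W_{m,r}[n,k]_q=0$ whenever $n<k$ or $n<0$ or $k<0$, and, for $n\ge 1$ and $0\le k\le n$, $$W_{m,r}[n,k]_q=q^{m(k-1)+r}\,W_{m,r}[n-1,k-1]_q+[mk+r]_q\,W_{m,r}[n-1,k]_q .$$ *)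

theory Defs
  imports "HOL-Analysis.Analysis"
begin

definition qpow :: "real \<Rightarrow> complex \<Rightarrow> complex" where
  "qpow q x = exp (x * complex_of_real (ln q))"

definition qnum :: "real \<Rightarrow> complex \<Rightarrow> complex" where
  "qnum q x = (1 - qpow q x) / (1 - complex_of_real q)"

definition qint :: "real \<Rightarrow> nat \<Rightarrow> real" where
  "qint p i = (1 - p ^ i) / (1 - p)"

definition qfact :: "real \<Rightarrow> nat \<Rightarrow> real" where
  "qfact p k = (\<Prod>i=1..k. qint p i)"

definition qbinom :: "real \<Rightarrow> nat \<Rightarrow> nat \<Rightarrow> real" where
  "qbinom p k j = qfact p k / (qfact p j * qfact p (k - j))"

text \<open>q-analogue of r-Whitney numbers of the second kind W_{m,r}[n,k]_q
  (for nonnegative n, k; values with negative index are 0).\<close>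
fun qW :: "real \<Rightarrow> nat \<Rightarrow> complex \<Rightarrow> nat \<Rightarrow> nat \<Rightarrow> complex" where
  "qW q m r 0 k = (if k = 0 then 1 else 0)"
| "qW q m r (Suc n) k =
     (if k > Suc n then 0
      else (if k = 0 then 0
            else qpow q (of_int (int m * (int k - 1)) + r) * qW q m r n (k - 1))
           + qnum q (of_nat (m * k) + r) * qW q m r n k)"

end

theory Submission
  imports Defs
begin

lemma pow_ne1: "(p::real) > 0 \<Longrightarrow> p \<noteq> 1 \<Longrightarrow> i \<ge> 1 \<Longrightarrow> p ^ i \<noteq> 1"
  by (metis log_pow_cancel not_one_le_zero power_0 real_of_nat_ge_one_iff)

lemma qint_nz: "(p::real) > 0 \<Longrightarrow> p \<noteq> 1 \<Longrightarrow> i \<ge> 1 \<Longrightarrow> qint p i \<noteq> 0"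
  unfolding qint_def using pow_ne1[of p i] by auto

lemma qfact_nz: "(p::real) > 0 \<Longrightarrow> p \<noteq> 1 \<Longrightarrow> qfact p k \<noteq> 0"
  unfolding qfact_def using qint_nz by auto

lemma qfact_Suc: "qfact p (Suc k) = qfact p k * qint p (Suc k)"
  unfolding qfact_def by (simp add: prod.cl_ivl_Suc)

lemma qfact_0[simp]: "qfact p 0 = 1"
  unfolding qfact_def by simp

lemma qbinom_0: "(p::real) > 0 \<Longrightarrow> p \<noteq> 1 \<Longrightarrow> qbinom p k 0 = 1"
  unfolding qbinom_def using qfact_nz[of p k] by simp

lemma qbinom_diag: "(p::real) > 0 \<Longrightarrow> p \<noteq> 1 \<Longrightarrow> qbinom p k k = 1"
  unfolding qbinom_def using qfact_nz[of p k] by simp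

lemma aux1: "(b::real) \<noteq> 0 \<Longrightarrow> c \<noteq> 0 \<Longrightarrow> 1 - x \<noteq> 0 \<Longrightarrow> 1 - p \<noteq> 0 \<Longrightarrow>
   a * ((1 - y) / (1 - p)) / (b * (c * ((1 - x) / (1 - p)))) * (1 - x) = a / (b * c) * (1 - y)"
proof -
  assume h: "(b::real) \<noteq> 0" "c \<noteq> 0" "1 - x \<noteq> 0" "1 - p \<noteq> 0"
  have "a * ((1 - y) / (1 - p)) / (b * (c * ((1 - x) / (1 - p)))) = a * (1 - y) / (b * c * (1 - x))"
    using h by (simp add: divide_simps)
  then show ?thesis using h by simp
qed

lemma aux2: "(a::real) \<noteq> 0 \<Longrightarrow> b \<noteq> 0 \<Longrightarrow> c \<noteq> 0 \<Longrightarrow> 1 - p*U \<noteq> 0 \<Longrightarrow> 1 - p*I \<noteq> 0 \<Longrightarrow> 1 - p \<noteq> 0 \<Longrightarrow> Y = p*I*U \<Longrightarrow>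
  a*((1-p*Y)/(1-p)) / (b*((1-p*I)/(1-p)) * (c*((1-p*U)/(1-p)))) = a/(b*(c*((1-p*U)/(1-p)))) + p*I * (a/(b*((1-p*I)/(1-p)) * c))"
  by (simp add: divide_simps) (simp add: algebra_simps)

lemma qb_step:
  assumes p: "(p::real) > 0" "p \<noteq> 1" and j: "j \<le> K"
  shows "qbinom p (Suc K) j * (1 - p ^ Suc (K - j)) = qbinom p K j * (1 - p ^ Suc K)"
proof -
  have e: "Suc K - j = Suc (K - j)" using j by simp
  have n1: "qfact p j \<noteq> 0" "qfact p (K - j) \<noteq> 0" "qfact p K \<noteq> 0" using qfact_nz p by auto
  have n2: "1 - p ^ Suc (K - j) \<noteq> 0" using pow_ne1[OF p, of "Suc (K-j)"] by auto
  have n3: "1 - p \<noteq> 0" using p by auto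
  show ?thesis unfolding qbinom_def e qfact_Suc qint_def
    by (rule aux1[OF n1(1) n1(2) n2 n3])
qed

lemma qb_pascal:
  assumes p: "(p::real) > 0" "p \<noteq> 1" and j: "1 \<le> j" "j \<le> K"
  shows "qbinom p (Suc K) j = qbinom p K (j - 1) + p ^ j * qbinom p K j"
proof -
  obtain i where i: "j = Suc i" using j by (cases j) auto
  have e1: "Suc K - j = Suc (K - j)" using j by simp
  have e2: "K - (j - 1) = Suc (K - j)" using j by simp
  have n1: "qfact p i \<noteq> 0" "qfact p (K - j) \<noteq> 0" "qfact p K \<noteq> 0" using qfact_nz p by auto
  have n2: "1 - p ^ Suc (K - j) \<noteq> 0" "1 - p ^ Suc i \<noteq> 0"
    using pow_ne1[OF p, of "Suc (K-j)"] pow_ne1[OF p, of "Suc i"] by auto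
  have n3: "1 - p \<noteq> 0" using p by auto
  have key: "p ^ K = p * p ^ i * p ^ (K - Suc i)"
  proof -
    have "K = Suc i + (K - Suc i)" using j i by simp
    then have "p ^ K = p ^ Suc i * p ^ (K - Suc i)" by (metis power_add)
    then show ?thesis by simp
  qed
  have ei: "Suc K - Suc i = Suc (K - Suc i)" "K - i = Suc (K - Suc i)" using j i by auto
  have b1: "qbinom p (Suc K) j = qfact p K*((1-p*p^K)/(1-p)) / ((qfact p i*((1-p*p^i)/(1-p))) * (qfact p (K-Suc i)*((1-p*p^(K-Suc i))/(1-p))))"
    unfolding i qbinom_def ei qfact_Suc qint_def power_Suc ..
  have b2: "qbinom p K (j-1) = qfact p K/(qfact p i*(qfact p (K-Suc i)*((1-p*p^(K-Suc i))/(1-p))))"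
    unfolding i qbinom_def diff_Suc_1 ei qfact_Suc qint_def power_Suc ..
  have b3: "qbinom p K j = qfact p K/(qfact p i*((1-p*p^i)/(1-p)) * qfact p (K-Suc i))"
    unfolding i qbinom_def qfact_Suc qint_def power_Suc ..
  show ?thesis unfolding b1 b2 b3 unfolding i power_Suc
    by (rule aux2[OF n1(3) n1(1) _ _ _ n3 key]) (use n1 n2 i in auto)
qed

definition cr :: "real \<Rightarrow> nat \<Rightarrow> nat \<Rightarrow> real" where
  "cr p k j = (-1) ^ (k - j) * p ^ ((k - j) choose 2) * qbinom p k j"

lemma choose2_Suc: "Suc n choose 2 = (n choose 2) + n"
  by (simp add: numeral_2_eq_2)

lemma cr_step:
  assumes p: "(p::real) > 0" "p \<noteq> 1" and j: "j \<le> K"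
  shows "cr p (Suc K) j * (p ^ Suc K - p ^ j) = p ^ K * (1 - p ^ Suc K) * cr p K j"
proof -
  have e: "Suc K - j = Suc (K - j)" using j by simp
  have pk: "p ^ Suc K = p ^ j * p ^ Suc (K - j)" "p ^ K = p ^ j * p ^ (K - j)"
    using j by (simp_all flip: power_add)
  have c1: "cr p (Suc K) j = - ((-1) ^ (K - j) * p ^ ((K - j) choose 2) * p ^ (K - j) * qbinom p (Suc K) j)"
    unfolding cr_def e choose2_Suc power_add by simp
  have c2: "p ^ Suc K - p ^ j = - (p ^ j * (1 - p ^ Suc (K - j)))"
    unfolding pk(1) by (simp add: algebra_simps)
  have "cr p (Suc K) j * (p ^ Suc K - p ^ j) = (-1) ^ (K - j) * p ^ ((K - j) choose 2) * p ^ (K - j) * p ^ j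
      * (qbinom p (Suc K) j * (1 - p ^ Suc (K - j)))"
    unfolding c1 c2 by (simp add: algebra_simps)
  also have "\<dots> = (-1) ^ (K - j) * p ^ ((K - j) choose 2) * p ^ (K - j) * p ^ j
      * (qbinom p K j * (1 - p ^ Suc K))"
    using qb_step[OF p j] by simp
  also have "\<dots> = p ^ K * (1 - p ^ Suc K) * cr p K j"
    unfolding cr_def pk(2) by (simp add: algebra_simps)
  finally show ?thesis .
qed

lemma cr_pascal:
  assumes p: "(p::real) > 0" "p \<noteq> 1" and j: "j \<le> Suc K"
  shows "cr p (Suc K) j = (if j = 0 then 0 else cr p K (j - 1))
                          - (if j = Suc K then 0 else p ^ K * cr p K j)"
proof (cases "j = 0")
  case True
  then show ?thesis unfolding cr_def using qbinom_0[OF p]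
    by (simp add: choose2_Suc power_add)
next
  case False
  show ?thesis
  proof (cases "j = Suc K")
    case True
    then show ?thesis unfolding cr_def using qbinom_diag[OF p] by simp
  next
    case F2: False
    have j1: "1 \<le> j" "j \<le> K" using False F2 j by auto
    have e1: "Suc K - j = Suc (K - j)" "K - (j - 1) = Suc (K - j)" using j1 by auto
    have pj: "p ^ K = p ^ j * p ^ (K - j)" using j1 by (simp flip: power_add)
    show ?thesis using False F2
      unfolding cr_def e1 qb_pascal[OF p j1] choose2_Suc pj
      by (simp add: power_add algebra_simps)
  qed
qed

lemma cr_sum0:
  assumes p: "(p::real) > 0" "p \<noteq> 1" and k: "k \<ge> 1"
  shows "(\<Sum>j=0..k. cr p k j) = 0"
proof -
  have rec: "(\<Sum>j=0..Suc K. cr p (Suc K) j) = (1 - p ^ K) * (\<Sum>j=0..K. cr p K j)" for K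
  proof -
    have "(\<Sum>j=0..Suc K. cr p (Suc K) j) =
      (\<Sum>j=0..Suc K. (if j = 0 then 0 else cr p K (j - 1)))
      - (\<Sum>j=0..Suc K. (if j = Suc K then 0 else p ^ K * cr p K j))"
      unfolding sum_subtractf[symmetric] using cr_pascal[OF p] by (intro sum.cong) auto
    also have "(\<Sum>j=0..Suc K. (if j = 0 then 0 else cr p K (j - 1))) = (\<Sum>j=0..K. cr p K j)"
      by (subst sum.atLeast0_atMost_Suc_shift) simp
    also have "(\<Sum>j=0..Suc K. (if j = Suc K then 0 else p ^ K * cr p K j))
       = p ^ K * (\<Sum>j=0..K. cr p K j)"
      by (subst sum.atLeast0_atMost_Suc) (simp add: sum_distrib_left)
    finally show ?thesis by (simp add: algebra_simps)
  qed
  obtain K where K: "k = Suc K" using k by (cases k) auto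
  show ?thesis unfolding K
  proof (induction K)
    case 0
    show ?case using rec[of 0] by simp
  next
    case (Suc K)
    then show ?case using rec[of "Suc K"] by simp
  qed
qed

lemma qpow_nat: "q > 0 \<Longrightarrow> qpow q (of_nat n) = complex_of_real (q ^ n)"
proof -
  assume q: "q > 0"
  have e: "exp (complex_of_real (ln q)) = complex_of_real q" using q by (metis exp_ln exp_of_real)
  show ?thesis unfolding qpow_def exp_of_nat_mult e by simp
qed

lemma qpow_add: "qpow q (a + b) = qpow q a * qpow q b"
  unfolding qpow_def by (simp add: distrib_right exp_add)

lemma A_eq: "q > 0 \<Longrightarrow> qnum q (of_nat (j * m) + r)
   = (1 - complex_of_real ((q ^ m) ^ j) * qpow q r) / (1 - complex_of_real q)"
proof -
  assume q: "q > 0"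
  have "qpow q (of_nat (j*m)) = complex_of_real ((q^m)^j)"
    by (simp only: qpow_nat[OF q]) (simp add: power_mult[symmetric] mult.commute)
  then show ?thesis unfolding qnum_def qpow_add by simp
qed

definition FF where
  "FF q m r n k = (1 / (complex_of_real (qfact (q ^ m) k) * qnum q (of_nat m) ^ k)) *
    (\<Sum>j=0..k. (-1) ^ (k - j) * complex_of_real (q ^ (m * ((k - j) choose 2)))
       * complex_of_real (qbinom (q ^ m) k j) * qnum q (of_nat (j * m) + r) ^ n)"

lemma FF_alt: "FF q m r n k = (1 / (complex_of_real (qfact (q ^ m) k) * qnum q (of_nat m) ^ k)) *
    (\<Sum>j=0..k. complex_of_real (cr (q ^ m) k j) * qnum q (of_nat (j * m) + r) ^ n)"
  unfolding FF_def cr_def by (simp add: power_mult)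

lemma FF_0_0: "FF q m r n 0 = qnum q r ^ n"
  unfolding FF_def qbinom_def by (simp add: numeral_2_eq_2)

lemma FF_zero_n:
  assumes "q > 0" "q \<noteq> 1" "m > 0" "k \<ge> 1"
  shows "FF q m r 0 k = 0"
proof -
  have p: "q ^ m > 0" "q ^ m \<noteq> 1" using assms pow_ne1[of q m] by auto
  have "(\<Sum>j=0..k. complex_of_real (cr (q ^ m) k j)) = complex_of_real (\<Sum>j=0..k. cr (q ^ m) k j)"
    by simp
  also have "\<dots> = 0" using cr_sum0[OF p assms(4)] by simp
  finally show ?thesis unfolding FF_alt by simp
qed

lemma qW_zero: "k > n \<Longrightarrow> qW q m r n k = 0"
  by (induction n arbitrary: k) auto

lemma Dreal:
  assumes q: "q > 0" "q \<noteq> 1"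
  shows "1 / (complex_of_real (qfact (q ^ m) k) * qnum q (of_nat m) ^ k)
     = complex_of_real (1 / (qfact (q ^ m) k * ((1 - q ^ m) / (1 - q)) ^ k))"
proof -
  have "qnum q (of_nat m) = complex_of_real ((1 - q ^ m) / (1 - q))"
    unfolding qnum_def qpow_nat[OF q(1)] by simp
  then show ?thesis by simp
qed

lemma aux3: "(z::real) \<noteq> 0 \<Longrightarrow> w \<noteq> 0 \<Longrightarrow> c \<noteq> 0 \<Longrightarrow> 1/(z*(c/w))*(1/w)*c = 1/z"
  by (simp add: divide_simps)

lemma aux4: "(1::real) - p \<noteq> 0 \<Longrightarrow> (x / (1-p)) * ((1-p)/(1-q)) = x / (1-q)"
  by (simp add: divide_simps)

lemma Dstep:
  assumes p: "(p::real) > 0" "p \<noteq> 1" and q: "q \<noteq> 1"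
  shows "1 / (qfact p (Suc K) * ((1 - p) / (1 - q)) ^ Suc K) * (1 / (1 - q)) * (1 - p ^ Suc K)
       = 1 / (qfact p K * ((1 - p) / (1 - q)) ^ K)"
proof -
  have n: "qfact p K \<noteq> 0" "1 - p ^ Suc K \<noteq> 0" "1 - p \<noteq> 0" "1 - q \<noteq> 0"
    using qfact_nz[OF p] pow_ne1[OF p, of "Suc K"] p q by auto
  define M where "M = (1 - p) / (1 - q)"
  have nM: "M ^ K \<noteq> 0" using n unfolding M_def by simp
  have e0: "qfact p (Suc K) * M ^ Suc K = qfact p K * M ^ K * ((1 - p ^ Suc K) / (1 - p) * M)"
    unfolding qfact_Suc qint_def by (simp add: algebra_simps)
  have e: "qfact p (Suc K) * M ^ Suc K = qfact p K * M ^ K * ((1 - p ^ Suc K) / (1 - q))"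
    unfolding e0 unfolding M_def using aux4[OF n(3)] by simp
  show ?thesis unfolding M_def[symmetric] e
    by (rule aux3) (use n nM in auto)
qed

lemma FF_rec:
  assumes q: "q > 0" "q \<noteq> 1" and m: "m > 0"
  shows "FF q m r (Suc n) (Suc K) =
     qpow q (of_int (int m * (int (Suc K) - 1)) + r) * FF q m r n K
     + qnum q (of_nat (m * Suc K) + r) * FF q m r n (Suc K)"
proof -
  define p where "p = q ^ m"
  have p: "p > 0" "p \<noteq> 1" using q m pow_ne1[of q m] unfolding p_def by auto
  define A where "A j = qnum q (of_nat (j * m) + r)" for j
  define Q where "Q = qpow q r"
  define S where "S n k = (\<Sum>j=0..k. complex_of_real (cr p k j) * A j ^ n)" for n k
  define D where "D k = 1 / (qfact p k * ((1 - p) / (1 - q)) ^ k)" for k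
  have FFe: "FF q m r n k = complex_of_real (D k) * S n k" for n k
    unfolding FF_alt Dreal[OF q] D_def S_def A_def p_def ..
  have Aeq: "A j = (1 - complex_of_real (p ^ j) * Q) / (1 - complex_of_real q)" for j
    unfolding A_def A_eq[OF q(1)] p_def Q_def ..
  have qc: "1 - complex_of_real q \<noteq> 0"
  proof
    assume "1 - complex_of_real q = 0"
    then have "complex_of_real q = complex_of_real 1" by simp
    then show False using q by (simp only: of_real_eq_iff)
  qed
  have h1: "A j - A (Suc K) = Q / (1 - complex_of_real q) * complex_of_real (p ^ Suc K - p ^ j)" for j
  proof -
    have "A j - A (Suc K) = ((1 - complex_of_real (p ^ j) * Q) - (1 - complex_of_real (p ^ Suc K) * Q))
        / (1 - complex_of_real q)"
      unfolding Aeq by (simp add: diff_divide_distrib)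
    also have "(1 - complex_of_real (p ^ j) * Q) - (1 - complex_of_real (p ^ Suc K) * Q)
        = Q * complex_of_real (p ^ Suc K - p ^ j)"
      by (simp add: algebra_simps)
    also have "Q * complex_of_real (p ^ Suc K - p ^ j) / (1 - complex_of_real q)
        = Q / (1 - complex_of_real q) * complex_of_real (p ^ Suc K - p ^ j)"
      by simp
    finally show ?thesis .
  qed
  have h2: "S (Suc n) (Suc K) = A (Suc K) * S n (Suc K)
      + Q / (1 - complex_of_real q) * complex_of_real (p ^ K * (1 - p ^ Suc K)) * S n K"
  proof -
    have "S (Suc n) (Suc K) - A (Suc K) * S n (Suc K)
        = (\<Sum>j=0..Suc K. complex_of_real (cr p (Suc K) j) * A j ^ n * (A j - A (Suc K)))"
      unfolding S_def sum_distrib_left sum_subtractf[symmetric]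
      by (intro sum.cong) (simp_all add: algebra_simps)
    also have "\<dots> = (\<Sum>j=0..K. complex_of_real (cr p (Suc K) j) * A j ^ n * (A j - A (Suc K)))"
      by (subst sum.atLeast0_atMost_Suc) simp
    also have "\<dots> = (\<Sum>j=0..K. Q / (1 - complex_of_real q) *
          complex_of_real (cr p (Suc K) j * (p ^ Suc K - p ^ j)) * A j ^ n)"
      unfolding h1 by (intro sum.cong) (simp_all add: algebra_simps)
    also have "\<dots> = (\<Sum>j=0..K. Q / (1 - complex_of_real q) *
          complex_of_real (p ^ K * (1 - p ^ Suc K)) * (complex_of_real (cr p K j) * A j ^ n))"
      apply (intro sum.cong refl)
      subgoal for j by (subst cr_step[OF p]) (auto simp: algebra_simps)
      done
    also have "\<dots> = Q / (1 - complex_of_real q) * complex_of_real (p ^ K * (1 - p ^ Suc K)) * S n K"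
      unfolding S_def sum_distrib_left ..
    finally show ?thesis by (simp add: algebra_simps)
  qed
  have h3: "qpow q (of_int (int m * (int (Suc K) - 1)) + r) = complex_of_real (p ^ K) * Q"
  proof -
    have "(of_int (int m * (int (Suc K) - 1)) :: complex) = of_nat (m * K)" by simp
    then show ?thesis unfolding qpow_add Q_def p_def
      by (simp only: qpow_nat[OF q(1)]) (simp add: power_mult)
  qed
  have h4: "complex_of_real (D (Suc K)) * (Q / (1 - complex_of_real q) * complex_of_real (p ^ K * (1 - p ^ Suc K)))
      = complex_of_real (p ^ K) * Q * complex_of_real (D K)"
  proof -
    have "D (Suc K) * (1 / (1 - q)) * (1 - p ^ Suc K) = D K"
      unfolding D_def by (rule Dstep[OF p q(2)])
    then have hD: "complex_of_real (D (Suc K) * (1 / (1 - q)) * (1 - p ^ Suc K)) = complex_of_real (D K)"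
      by simp
    have e: "complex_of_real (D (Suc K) * (1/(1-q)) * (1 - p^Suc K)) = complex_of_real (D (Suc K)) * (1 / (1 - complex_of_real q)) * complex_of_real(1 - p^Suc K)"
      by (simp only: of_real_mult of_real_divide of_real_1 of_real_diff)
    have hD': "complex_of_real (D K) = complex_of_real (D (Suc K)) * (1 / (1 - complex_of_real q)) * complex_of_real(1 - p^Suc K)"
      using hD e by simp
    show ?thesis unfolding hD' of_real_mult by (simp add: divide_inverse mult_ac)
  qed
  have h5: "qnum q (of_nat (m * Suc K) + r) = A (Suc K)" unfolding A_def by (simp add: mult.commute)
  have ring: "d * (a * s1 + z * s0) = x * (dk * s0) + a * (d * s1)"
    if "d * z = x * dk" for d a s1 z s0 x dk :: complex
    using that by (simp add: algebra_simps)
  show ?thesis unfolding FFe h2 h3 h5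
    by (rule ring[OF h4])
qed

theorem theorem3:
  fixes q :: real and m :: nat and r :: complex and n k :: nat
  assumes "q > 0" and "q \<noteq> 1" and "m > 0"
  shows "qW q m r n k =
    (1 / (complex_of_real (qfact (q ^ m) k) * qnum q (of_nat m) ^ k)) *
    (\<Sum>j=0..k. (-1) ^ (k - j) * complex_of_real (q ^ (m * ((k - j) choose 2)))
       * complex_of_real (qbinom (q ^ m) k j) * qnum q (of_nat (j * m) + r) ^ n)"
proof -
  have "qW q m r n k = FF q m r n k"
  proof (induction n arbitrary: k)
    case 0
    then show ?case
      by (cases k) (simp_all add: FF_0_0 FF_zero_n[OF assms])
  next
    case (Suc n)
    show ?case
    proof (cases k)
      case 0
      then show ?thesis using Suc by (simp add: FF_0_0)
    next
      case (Suc K)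
      have "FF q m r (Suc n) k = qpow q (of_int (int m * (int (Suc K) - 1)) + r) * qW q m r n K
     + qnum q (of_nat (m * Suc K) + r) * qW q m r n (Suc K)"
        unfolding Suc FF_rec[OF assms] using \<open>\<And>k. qW q m r n k = FF q m r n k\<close> by simp
      also have "\<dots> = qW q m r (Suc n) k"
        unfolding Suc using qW_zero[of n K] qW_zero[of n "Suc K"] by auto
      finally show ?thesis by simp
    qed
  qed
  then show ?thesis unfolding FF_def .
qed

end
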